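(* The following randomized mechanism for a combinatorial auction with item set $M$ and bidder set $N$ is universally obviously strategy-proof. Index the bidders in an arbitrary fixed order. Independently place each bidder in a set $S$ with probability $1/2$ and in a set $U$ otherwise. Bidders in $S$ receive nothing and pay nothing, and report their value for each item. For each item $j$, set price $p_j=\max_{i\in S}v_{ij}$ and let $n(j)$ be the smallest index among bidders in $\arg\max_{i\in S}v_{ij}$. Then, for each $i\in U$ in an arbitrary order, bidder $i$ purchases (paying $p_j$ for each) all previously unsold items $j$ for which either $v_{ij}>p_j$, or $v_{ij}=p_j$ and $i$ has a lower index than $n(j)$.
   Context: Bidders have additive valuations: bidder $i$ has private values $v_{ij}\ge0$ for items $j\in M$, and $v_i(A)=\sum_{j\in A}v_{ij}$; utilities are quasi-linear. In the mechanism, bidders in $U$ act by choosing which available items to purchase (equivalently, reporting which items they accept at the posted prices). A deterministic mechanism is a rooted tree: each internal node is assigned to one bidder, who sends one of the messages labeling the outgoing edges; each leaf is labeled with a feasible allocation and payments. A behavior $B_i$ specifies a message at every node of bidder $i$; a profile $B$ determines a root-to-leaf path $\mathrm{Path}(B)$ with bundle $f_i(B)$ and payment $p_i(B)$ for $i$. A strategy $\mathcal S_i$ maps each valuation $v_i$ in the domain to a behavior; it is obviously dominant if for every $v_i$, every node $u$ of $i$, every $B_{-i}$ and every profile $B'$ with $u\in\mathrm{Path}(\mathcal S_i(v_i),B_{-i})\cap\mathrm{Path}(B')$ and $B'_i$ sending at $u$ a message different from $\mathcal S_i(v_i)$'s, $v_i(f_i(\mathcal S_i(v_i),B_{-i}))-p_i(\mathcal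 S_i(v_i),B_{-i})\ge v_i(f_i(B'))-p_i(B')$. A deterministic mechanism is OSP if it has obviously dominant strategies for all bidders; a randomized mechanism (a distribution over deterministic mechanisms with strategies) is universally OSP if every mechanism in its support is OSP. *)

theory Defs
  imports "HOL-Probability.Probability"
begin

text \<open>A mechanism tree: internal nodes are assigned to a bidder (a natural number) and
carry the set of admissible messages (edge labels) together with the child reached by
each message; leaves carry an outcome.  Nodes are identified by the history
(list of messages) leading to them from the root.\<close>

datatype ('m, 'o) mtree = Leaf 'o | Node nat "'m set" "'m \<Rightarrow> ('m, 'o) mtree"

primrec subtree :: "('m, 'o) mtree \<Rightarrow> 'm list \<Rightarrow> ('m, 'o) mtree option" where
  "subtree T [] = Some T"
| "subtree T (m # h) =
     (case T of Leaf _ \<Rightarrow> None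
              | Node a ms c \<Rightarrow> (if m \<in> ms then subtree (c m) h else None))"

definition node_of :: "('m, 'o) mtree \<Rightarrow> nat \<Rightarrow> 'm list \<Rightarrow> bool" where
  "node_of T i h \<longleftrightarrow> (\<exists>ms c. subtree T h = Some (Node i ms c))"

definition msgs_at :: "('m, 'o) mtree \<Rightarrow> 'm list \<Rightarrow> 'm set" where
  "msgs_at T h = (case subtree T h of Some (Node a ms c) \<Rightarrow> ms | _ \<Rightarrow> {})"

definition valid_behavior :: "('m, 'o) mtree \<Rightarrow> nat \<Rightarrow> ('m list \<Rightarrow> 'm) \<Rightarrow> bool" where
  "valid_behavior T i b \<longleftrightarrow> (\<forall>h. node_of T i h \<longrightarrow> b h \<in> msgs_at T h)"

definition valid_profile :: "('m, 'o) mtree \<Rightarrow> (nat \<Rightarrow> 'm list \<Rightarrow> 'm) \<Rightarrow> bool" where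
  "valid_profile T B \<longleftrightarrow> (\<forall>i. valid_behavior T i (B i))"

definition on_path :: "('m, 'o) mtree \<Rightarrow> (nat \<Rightarrow> 'm list \<Rightarrow> 'm) \<Rightarrow> 'm list \<Rightarrow> bool" where
  "on_path T B h \<longleftrightarrow> subtree T h \<noteq> None \<and>
     (\<forall>k < length h. \<exists>a ms c. subtree T (take k h) = Some (Node a ms c) \<and> h ! k = B a (take k h))"

definition outcome :: "('m, 'o) mtree \<Rightarrow> (nat \<Rightarrow> 'm list \<Rightarrow> 'm) \<Rightarrow> 'o" where
  "outcome T B = (THE oc. \<exists>h. on_path T B h \<and> subtree T h = Some (Leaf oc))"

type_synonym 'i outc = "(nat \<Rightarrow> 'i set) \<times> (nat \<Rightarrow> real)"

definition utility :: "('i \<Rightarrow> real) \<Rightarrow> 'i outc \<Rightarrow> nat \<Rightarrow> real" where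
  "utility v oc i = sum v (fst oc i) - snd oc i"

text \<open>Additive valuations with nonnegative item values.\<close>
definition additive_dom :: "'i set \<Rightarrow> ('i \<Rightarrow> real) set" where
  "additive_dom M = {v. \<forall>j\<in>M. 0 \<le> v j}"

definition OSP :: "('m, 'i outc) mtree \<Rightarrow> ('i \<Rightarrow> real) set
                    \<Rightarrow> (nat \<Rightarrow> ('i \<Rightarrow> real) \<Rightarrow> 'm list \<Rightarrow> 'm) \<Rightarrow> bool" where
  "OSP T D \<sigma> \<longleftrightarrow>
    (\<forall>i. \<forall>v\<in>D. valid_behavior T i (\<sigma> i v) \<and>
       (\<forall>h B B'. node_of T i h \<and> valid_profile T B \<and> valid_profile T B'
          \<and> on_path T (B(i := \<sigma> i v)) h \<and> on_path T B' h \<and> B' i h \<noteq> \<sigma> i v h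
          \<longrightarrow> utility v (outcome T B') i \<le> utility v (outcome T (B(i := \<sigma> i v))) i))"

definition feasible :: "nat \<Rightarrow> 'i set \<Rightarrow> (nat \<Rightarrow> 'i set) \<Rightarrow> bool" where
  "feasible n M al \<longleftrightarrow> (\<forall>i. al i \<subseteq> M) \<and> (\<forall>i. i \<ge> n \<longrightarrow> al i = {})
     \<and> (\<forall>i k. i \<noteq> k \<longrightarrow> al i \<inter> al k = {})"

definition mechanism_wf :: "nat \<Rightarrow> 'i set \<Rightarrow> ('m, 'i outc) mtree \<Rightarrow> bool" where
  "mechanism_wf n M T \<longleftrightarrow>
     (\<forall>h a ms c. subtree T h = Some (Node a ms c) \<longrightarrow> ms \<noteq> {}) \<and>
     (\<forall>h oc. subtree T h = Some (Leaf oc) \<longrightarrow> feasible n M (fst oc))"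

definition universally_OSP :: "nat \<Rightarrow> 'i set \<Rightarrow> ('i \<Rightarrow> real) set
   \<Rightarrow> (('m, 'i outc) mtree \<times> (nat \<Rightarrow> ('i \<Rightarrow> real) \<Rightarrow> 'm list \<Rightarrow> 'm)) pmf \<Rightarrow> bool" where
  "universally_OSP n M D R \<longleftrightarrow>
     (\<forall>(T, \<sigma>) \<in> set_pmf R. mechanism_wf n M T \<and> OSP T D \<sigma>)"

datatype 'i msg = Report "'i \<Rightarrow> real" | Buy "'i set"

definition price :: "nat set \<Rightarrow> (nat \<Rightarrow> 'i \<Rightarrow> real) \<Rightarrow> 'i \<Rightarrow> real" where
  "price S rep j = (if S = {} then 0 else Max ((\<lambda>i. rep i j) ` S))"

text \<open>n(j): smallest index in S attaining the price (n, i.e. above all indices, if S empty).\<close>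
definition tiebreak :: "nat \<Rightarrow> nat set \<Rightarrow> (nat \<Rightarrow> 'i \<Rightarrow> real) \<Rightarrow> 'i \<Rightarrow> nat" where
  "tiebreak n S rep j = (if S = {} then n else (LEAST i. i \<in> S \<and> rep i j = price S rep j))"

primrec mk_U :: "nat list \<Rightarrow> ('i \<Rightarrow> real) \<Rightarrow> 'i set \<Rightarrow> (nat \<Rightarrow> 'i set)
                  \<Rightarrow> ('i msg, 'i outc) mtree" where
  "mk_U [] p avail al = Leaf (al, \<lambda>i. sum p (al i))"
| "mk_U (i # is) p avail al =
     Node i (Buy ` Pow avail)
       (\<lambda>m. case m of Buy A \<Rightarrow> mk_U is p (avail - A) (al(i := A))
                    | Report _ \<Rightarrow> Leaf (al, \<lambda>i. sum p (al i)))"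

primrec mk_S :: "nat list \<Rightarrow> nat set \<Rightarrow> nat list \<Rightarrow> 'i set \<Rightarrow> (nat \<Rightarrow> 'i \<Rightarrow> real)
                  \<Rightarrow> ('i msg, 'i outc) mtree" where
  "mk_S [] S Us M rep = mk_U Us (price S rep) M (\<lambda>_. {})"
| "mk_S (i # is) S Us M rep =
     Node i (Report ` additive_dom M)
       (\<lambda>m. case m of Report r \<Rightarrow> mk_S is S Us M (rep(i := r))
                    | Buy _ \<Rightarrow> Leaf (\<lambda>_. {}, \<lambda>_. 0))"

definition mech :: "'i set \<Rightarrow> nat set \<Rightarrow> nat list \<Rightarrow> ('i msg, 'i outc) mtree" where
  "mech M S Us = mk_S (sorted_list_of_set S) S Us M (\<lambda>_ _. 0)"

definition rep_of :: "nat list \<Rightarrow> 'i msg list \<Rightarrow> nat \<Rightarrow> 'i \<Rightarrow> real" where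
  "rep_of Sl h i = (case map_of (zip Sl h) i of Some (Report r) \<Rightarrow> r | _ \<Rightarrow> (\<lambda>_. 0))"

definition avail_of :: "'i set \<Rightarrow> 'i msg list \<Rightarrow> 'i set" where
  "avail_of M h = M - \<Union>{A. Buy A \<in> set h}"

definition strat :: "nat \<Rightarrow> 'i set \<Rightarrow> nat set \<Rightarrow> nat \<Rightarrow> ('i \<Rightarrow> real) \<Rightarrow> 'i msg list \<Rightarrow> 'i msg" where
  "strat n M S i v h =
     (if i \<in> S then Report v
      else (let rep = rep_of (sorted_list_of_set S) h; p = price S rep
            in Buy {j \<in> avail_of M h. p j < v j \<or> (p j = v j \<and> i < tiebreak n S rep j)}))"

definition rand_mech :: "nat \<Rightarrow> 'i set \<Rightarrow> (nat set \<Rightarrow> nat list)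
     \<Rightarrow> (('i msg, 'i outc) mtree \<times> (nat \<Rightarrow> ('i \<Rightarrow> real) \<Rightarrow> 'i msg list \<Rightarrow> 'i msg)) pmf" where
  "rand_mech n M ordU =
     map_pmf (\<lambda>f. let S = {i \<in> {0..<n}. f i} in (mech M S (ordU S), strat n M S))
             (Pi_pmf {0..<n} False (\<lambda>_. bernoulli_pmf (1/2)))"

end

theory Submission
  imports Defs
begin

primrec run :: "('m, 'o) mtree \<Rightarrow> (nat \<Rightarrow> 'm list \<Rightarrow> 'm) \<Rightarrow> 'o" where
  "run (Leaf oc) B = oc"
| "run (Node a ms c) B = run (c (B a [])) (\<lambda>i g. B i (B a [] # g))"

lemma on_path_Nil[simp]: "on_path T B []"
  by (simp add: on_path_def)

lemma on_path_Cons: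
  "on_path T B (m # h) \<longleftrightarrow>
   (\<exists>a ms c. T = Node a ms c \<and> m \<in> ms \<and> m = B a [] \<and> on_path (c m) (\<lambda>i g. B i (m # g)) h)"
proof
  assume A: "on_path T B (m # h)"
  then obtain a ms c where T: "T = Node a ms c" and mm: "m \<in> ms"
    by (cases T) (auto simp: on_path_def split: if_splits)
  have "m = B a []" using A T unfolding on_path_def by (metis length_Cons list.sel(1) mtree.inject(2) nth_Cons_0 option.inject subtree.simps(1) take0 zero_less_Suc)
  moreover have "on_path (c m) (\<lambda>i g. B i (m # g)) h"
    unfolding on_path_def
  proof (intro conjI allI impI)
    show "subtree (c m) h \<noteq> None" using A T mm by (simp add: on_path_def)
    fix k assume "k < length h"
    then have "Suc k < length (m # h)" by simp
    with A obtain a' ms' c' where s1: "subtree T (take (Suc k) (m # h)) = Some (Node a' ms' c')"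
       and s2: "(m # h) ! Suc k = B a' (take (Suc k) (m # h))" unfolding on_path_def by blast
    have "subtree (c m) (take k h) = Some (Node a' ms' c')" using s1 T mm by simp
    moreover have "h ! k = B a' (m # take k h)" using s2 by simp
    ultimately show "\<exists>a1 ms1 c1. subtree (c m) (take k h) = Some (Node a1 ms1 c1) \<and> h ! k = B a1 (m # take k h)"
      by blast
  qed
  ultimately show "\<exists>a ms c. T = Node a ms c \<and> m \<in> ms \<and> m = B a [] \<and> on_path (c m) (\<lambda>i g. B i (m # g)) h"
    using T mm by blast
next
  assume "\<exists>a ms c. T = Node a ms c \<and> m \<in> ms \<and> m = B a [] \<and> on_path (c m) (\<lambda>i g. B i (m # g)) h"
  then obtain a ms c where T: "T = Node a ms c" and mm: "m \<in> ms" and mB: "m = B a []"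
    and P: "on_path (c m) (\<lambda>i g. B i (m # g)) h" by blast
  show "on_path T B (m # h)"
    unfolding on_path_def
  proof (intro conjI allI impI)
    show "subtree T (m # h) \<noteq> None" using P T mm by (simp add: on_path_def)
    fix k assume k: "k < length (m # h)"
    show "\<exists>a ms c. subtree T (take k (m # h)) = Some (Node a ms c) \<and> (m # h) ! k = B a (take k (m # h))"
    proof (cases k)
      case 0 then show ?thesis using T mB by simp
    next
      case (Suc k')
      then have "k' < length h" using k by simp
      with P obtain a' ms' c' where "subtree (c m) (take k' h) = Some (Node a' ms' c')"
        "h ! k' = B a' (m # take k' h)" unfolding on_path_def by blast
      then show ?thesis using T mm Suc by auto
    qed
  qed
qed

lemma run_leaf: "on_path T B h \<Longrightarrow> subtree T h = Some (Leaf oc) \<Longrightarrow> run T B = oc"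
proof (induction h arbitrary: T B)
  case Nil then show ?case by simp
next
  case (Cons m h)
  then obtain a ms c where T: "T = Node a ms c" "m \<in> ms" "m = B a []"
    "on_path (c m) (\<lambda>i g. B i (m # g)) h" by (auto simp: on_path_Cons)
  with Cons show ?case by auto
qed

lemma run_sub: "on_path T B h \<Longrightarrow> subtree T h = Some T' \<Longrightarrow> run T B = run T' (\<lambda>i g. B i (h @ g))"
proof (induction h arbitrary: T B)
  case Nil then show ?case by simp
next
  case (Cons m h)
  then obtain a ms c where T: "T = Node a ms c" "m \<in> ms" "m = B a []"
    "on_path (c m) (\<lambda>i g. B i (m # g)) h" by (auto simp: on_path_Cons)
  with Cons.IH[of "c m" "\<lambda>i g. B i (m # g)"] Cons.prems show ?case by auto
qed

lemma valid_shift: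
  assumes "valid_profile (Node a ms c) B" "m \<in> ms"
  shows "valid_profile (c m) (\<lambda>i g. B i (m # g))"
  unfolding valid_profile_def valid_behavior_def
proof (intro allI impI)
  fix i h assume "node_of (c m) i h"
  then obtain ms' c' where s: "subtree (c m) h = Some (Node i ms' c')" by (auto simp: node_of_def)
  then have s2: "subtree (Node a ms c) (m # h) = Some (Node i ms' c')" using assms(2) by simp
  then have "node_of (Node a ms c) i (m # h)" by (simp add: node_of_def)
  then have "B i (m # h) \<in> msgs_at (Node a ms c) (m # h)"
    using assms(1) unfolding valid_profile_def valid_behavior_def by blast
  then show "B i (m # h) \<in> msgs_at (c m) h" using s s2 by (simp add: msgs_at_def)
qed

lemma valid_path: "valid_profile T B \<Longrightarrow> \<exists>h oc. on_path T B h \<and> subtree T h = Some (Leaf oc)"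
proof (induction T arbitrary: B)
  case (Leaf x) then show ?case by (intro exI[of _ "[]"]) auto
next
  case (Node a ms c)
  have "node_of (Node a ms c) a []" by (simp add: node_of_def)
  then have m: "B a [] \<in> ms" using Node.prems
    unfolding valid_profile_def valid_behavior_def msgs_at_def by force
  from Node.IH[OF _ valid_shift[OF Node.prems m]]
  obtain h oc where "on_path (c (B a [])) (\<lambda>i g. B i (B a [] # g)) h"
    "subtree (c (B a [])) h = Some (Leaf oc)" by auto
  then show ?case using m by (intro exI[of _ "B a [] # h"] exI[of _ oc]) (auto simp: on_path_Cons)
qed

lemma outcome_run: "valid_profile T B \<Longrightarrow> outcome T B = run T B"
  unfolding outcome_def
proof (rule the_equality)
  assume "valid_profile T B"
  from valid_path[OF this] obtain h oc where "on_path T B h" "subtree T h = Some (Leaf oc)" by blast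
  then show "\<exists>h. on_path T B h \<and> subtree T h = Some (Leaf (run T B))" using run_leaf by metis
next
  fix oc assume "\<exists>h. on_path T B h \<and> subtree T h = Some (Leaf oc)"
  then show "oc = run T B" using run_leaf by metis
qed

fun upd :: "nat list \<Rightarrow> ('i \<Rightarrow> real) list \<Rightarrow> (nat \<Rightarrow> 'i \<Rightarrow> real) \<Rightarrow> (nat \<Rightarrow> 'i \<Rightarrow> real)" where
  "upd (i # js) (r # rs) rep = upd js rs (rep(i := r))"
| "upd _ _ rep = rep"

lemma subtree_Leaf: "subtree (Leaf x) h = Some T' \<longleftrightarrow> h = [] \<and> T' = Leaf x"
  by (cases h) auto

lemma sub_U:
  "subtree (mk_U Us p avail al) h = Some T' \<Longrightarrow>
   \<exists>k As al'. k \<le> length Us \<and> length As = k \<and> h = map Buy As \<and>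
     T' = mk_U (drop k Us) p (avail - \<Union>(set As)) al'"
proof (induction Us arbitrary: avail al h)
  case Nil then show ?case by (auto simp: subtree_Leaf intro!: exI[of _ "[]"])
next
  case (Cons i js)
  show ?case
  proof (cases h)
    case Nil then show ?thesis using Cons.prems by (auto intro!: exI[of _ "[]"])
  next
    case (Cons m h')
    with Cons.prems obtain A where m: "m = Buy A" "A \<subseteq> avail"
      and s: "subtree (mk_U js p (avail - A) (al(i := A))) h' = Some T'"
      by (auto split: if_splits)
    from Cons.IH[OF s] obtain k As al' where "k \<le> length js" "length As = k" "h' = map Buy As"
      "T' = mk_U (drop k js) p (avail - A - \<Union>(set As)) al'" by blast
    then show ?thesis using m Cons
      by (intro exI[of _ "Suc k"] exI[of _ "A # As"] exI[of _ al']) (auto simp: Diff_eq Int_assoc)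
  qed
qed

lemma sub_S:
  "subtree (mk_S Sl S Us M rep) h = Some T' \<Longrightarrow>
   (\<exists>k rs. k < length Sl \<and> length rs = k \<and> h = map Report rs \<and>
      T' = mk_S (drop k Sl) S Us M (upd (take k Sl) rs rep)) \<or>
   (\<exists>rs h2. length rs = length Sl \<and> h = map Report rs @ h2 \<and>
      subtree (mk_U Us (price S (upd Sl rs rep)) M (\<lambda>_. {})) h2 = Some T')"
proof (induction Sl arbitrary: rep h)
  case Nil then show ?case by auto
next
  case (Cons i js)
  show ?case
  proof (cases h)
    case Nil then show ?thesis using Cons.prems by (auto intro!: exI[of _ "[]"])
  next
    case (Cons m h')
    with Cons.prems obtain r where m: "m = Report r"
      and s: "subtree (mk_S js S Us M (rep(i := r))) h' = Some T'"
      by (auto split: if_splits)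
    from Cons.IH[OF s] show ?thesis
    proof
      assume "\<exists>k rs. k < length js \<and> length rs = k \<and> h' = map Report rs \<and>
        T' = mk_S (drop k js) S Us M (upd (take k js) rs (rep(i := r)))"
      then obtain k rs where "k < length js" "length rs = k" "h' = map Report rs"
        "T' = mk_S (drop k js) S Us M (upd (take k js) rs (rep(i := r)))" by blast
      then show ?thesis using m Cons
        by (intro disjI1 exI[of _ "Suc k"] exI[of _ "r # rs"]) auto
    next
      assume "\<exists>rs h2. length rs = length js \<and> h' = map Report rs @ h2 \<and>
        subtree (mk_U Us (price S (upd js rs (rep(i := r)))) M (\<lambda>_. {})) h2 = Some T'"
      then obtain rs h2 where "length rs = length js" "h' = map Report rs @ h2"
        "subtree (mk_U Us (price S (upd js rs (rep(i := r)))) M (\<lambda>_. {})) h2 = Some T'" by blast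
      then show ?thesis using m Cons
        by (intro disjI2 exI[of _ "r # rs"] exI[of _ h2]) auto
    qed
  qed
qed

lemma upd_notin: "i \<notin> set Sl \<Longrightarrow> upd Sl rs rep i = rep i"
  by (induction Sl rs rep rule: upd.induct) auto

lemma upd_val:
  "distinct Sl \<Longrightarrow> length rs = length Sl \<Longrightarrow> i \<in> set Sl \<Longrightarrow>
   upd Sl rs rep i = rep_of Sl (map Report rs @ h2) i"
proof (induction Sl rs arbitrary: rep rule: list_induct2')
  case (4 i' js r rs)
  show ?case
  proof (cases "i = i'")
    case True
    then show ?thesis using 4 by (simp add: upd_notin rep_of_def)
  next
    case False
    then show ?thesis using 4 by (simp add: rep_of_def)
  qed
qed auto

lemma price_cong: "(\<And>i. i \<in> S \<Longrightarrow> r1 i = r2 i) \<Longrightarrow> price S r1 = price S r2"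
  unfolding price_def by (intro ext) (auto intro!: arg_cong[where f = Max] image_cong)

lemma run_U_notin:
  "i \<notin> set Us \<Longrightarrow> fst (run (mk_U Us p avail al) Y) i = al i \<and> snd (run (mk_U Us p avail al) Y) i = sum p (al i)"
proof (induction Us arbitrary: avail al Y)
  case Nil then show ?case by simp
next
  case (Cons i' js)
  show ?case
  proof (cases "Y i' []")
    case (Report r) then show ?thesis by simp
  next
    case (Buy A) then show ?thesis using Cons by simp
  qed
qed

lemma run_S_notin:
  "i \<notin> set Us \<Longrightarrow> fst (run (mk_S Sl S Us M rep) Y) i = {} \<and> snd (run (mk_S Sl S Us M rep) Y) i = 0"
proof (induction Sl arbitrary: rep Y)
  case Nil then show ?case using run_U_notin[OF Nil, of "price S rep" M "\<lambda>_. {}" Y] by simp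
next
  case (Cons i' js)
  show ?case
  proof (cases "Y i' []")
    case (Report r) then show ?thesis using Cons by simp
  next
    case (Buy A) then show ?thesis by simp
  qed
qed

definition inv_U :: "nat \<Rightarrow> 'i set \<Rightarrow> 'i set \<Rightarrow> (nat \<Rightarrow> 'i set) \<Rightarrow> bool" where
  "inv_U n M avail al \<longleftrightarrow> avail \<subseteq> M \<and> (\<forall>i. al i \<subseteq> M) \<and> (\<forall>i. al i \<inter> avail = {})
     \<and> (\<forall>i k. i \<noteq> k \<longrightarrow> al i \<inter> al k = {}) \<and> (\<forall>i. n \<le> i \<longrightarrow> al i = {})"

lemma wf_U: "inv_U n M avail al \<Longrightarrow> set Us \<subseteq> {..<n} \<Longrightarrow> mechanism_wf n M (mk_U Us p avail al)"
proof (induction Us arbitrary: avail al)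
  case Nil
  then show ?case unfolding mechanism_wf_def
    by (auto simp: subtree_Leaf feasible_def inv_U_def)
next
  case (Cons i js)
  show ?case unfolding mechanism_wf_def
  proof (intro conjI allI impI)
    fix h a ms c assume "subtree (mk_U (i # js) p avail al) h = Some (Node a ms c)"
    then show "ms \<noteq> {}"
    proof (cases h)
      case Nil then show ?thesis using \<open>subtree _ h = _\<close> by auto
    next
      case (Cons m h')
      with \<open>subtree _ h = _\<close> obtain A where "A \<subseteq> avail"
        and s: "subtree (mk_U js p (avail - A) (al(i := A))) h' = Some (Node a ms c)"
        by (auto split: if_splits)
      moreover have "inv_U n M (avail - A) (al(i := A))"
        using Cons.prems \<open>A \<subseteq> avail\<close> unfolding inv_U_def by auto blast+
      moreover have "set js \<subseteq> {..<n}" using Cons.prems(2) by simp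
      ultimately have "mechanism_wf n M (mk_U js p (avail - A) (al(i := A)))"
        using Cons.IH by blast
      then show ?thesis using s unfolding mechanism_wf_def by blast
    qed
  next
    fix h oc assume "subtree (mk_U (i # js) p avail al) h = Some (Leaf oc)"
    then show "feasible n M (fst oc)"
    proof (cases h)
      case Nil then show ?thesis using \<open>subtree _ h = _\<close> by auto
    next
      case (Cons m h')
      with \<open>subtree _ h = _\<close> obtain A where "A \<subseteq> avail"
        and s: "subtree (mk_U js p (avail - A) (al(i := A))) h' = Some (Leaf oc)"
        by (auto split: if_splits)
      moreover have "inv_U n M (avail - A) (al(i := A))"
        using Cons.prems \<open>A \<subseteq> avail\<close> unfolding inv_U_def by auto blast+
      moreover have "set js \<subseteq> {..<n}" using Cons.prems(2) by simp
      ultimately have "mechanism_wf n M (mk_U js p (avail - A) (al(i := A)))"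
        using Cons.IH by blast
      then show ?thesis using s unfolding mechanism_wf_def by blast
    qed
  qed
qed

lemma wf_S: "set Us \<subseteq> {..<n} \<Longrightarrow> mechanism_wf n M (mk_S Sl S Us M rep)"
proof (induction Sl arbitrary: rep)
  case Nil
  have "inv_U n M M (\<lambda>_. {})" by (simp add: inv_U_def)
  then show ?case using wf_U Nil by simp
next
  case (Cons i js)
  have D: "(\<lambda>_. 0) \<in> additive_dom M" by (simp add: additive_dom_def)
  show ?case unfolding mechanism_wf_def
  proof (intro conjI allI impI)
    fix h a ms c assume "subtree (mk_S (i # js) S Us M rep) h = Some (Node a ms c)"
    then show "ms \<noteq> {}"
    proof (cases h)
      case Nil then show ?thesis using \<open>subtree _ h = _\<close> D by auto
    next
      case (Cons m h')
      with \<open>subtree _ h = _\<close> obtain r where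
        "subtree (mk_S js S Us M (rep(i := r))) h' = Some (Node a ms c)"
        by (auto split: if_splits)
      then show ?thesis using Cons.IH[of "rep(i := r)"] Cons.prems
        unfolding mechanism_wf_def by blast
    qed
  next
    fix h oc assume "subtree (mk_S (i # js) S Us M rep) h = Some (Leaf oc)"
    then show "feasible n M (fst oc)"
    proof (cases h)
      case Nil then show ?thesis using \<open>subtree _ h = _\<close> by auto
    next
      case (Cons m h')
      with \<open>subtree _ h = _\<close> obtain r where
        "subtree (mk_S js S Us M (rep(i := r))) h' = Some (Leaf oc)"
        by (auto split: if_splits)
      then show ?thesis using Cons.IH[of "rep(i := r)"] Cons.prems
        unfolding mechanism_wf_def by blast
    qed
  qed
qed

lemma ineq:
  fixes v p :: "'i \<Rightarrow> real"
  assumes "finite Av" "A \<subseteq> Av" "{j \<in> Av. p j < v j} \<subseteq> As" "As \<subseteq> {j \<in> Av. p j \<le> v j}"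
  shows "sum v A - sum p A \<le> sum v As - sum p As"
proof -
    have "sum v A - sum p A = (\<Sum>j\<in>A. v j - p j)" by (simp add: sum_subtractf)
  also have "\<dots> \<le> (\<Sum>j\<in>A. max 0 (v j - p j))" by (intro sum_mono) auto
  also have "\<dots> \<le> (\<Sum>j\<in>Av. max 0 (v j - p j))"
    using assms by (intro sum_mono2) auto
  also have "\<dots> = (\<Sum>j\<in>As. max 0 (v j - p j))"
  proof (rule sum.mono_neutral_right)
    show "\<forall>j\<in>Av - As. max 0 (v j - p j) = 0" using assms(3) by force
  qed (use assms in auto)
  also have "\<dots> = (\<Sum>j\<in>As. v j - p j)"
    using assms(4) by (intro sum.cong) auto
  also have "\<dots> = sum v As - sum p As" by (simp add: sum_subtractf)
  finally show ?thesis .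
qed

lemma cls:
  assumes st: "subtree (mk_S Sl S Us M rep0) h = Some (Node i ms c)"
    and dU: "distinct Us" and disj: "set Us \<inter> S = {}" and sSl: "set Sl = S"
  shows "(i \<in> S \<and> ms = Report ` additive_dom M) \<or>
     (\<exists>rs As js al'. i \<notin> S \<and> i \<notin> set js \<and> h = map Report rs @ map Buy As \<and> length rs = length Sl \<and>
        ms = Buy ` Pow (M - \<Union>(set As)) \<and>
        subtree (mk_S Sl S Us M rep0) h = Some (mk_U (i # js) (price S (upd Sl rs rep0)) (M - \<Union>(set As)) al'))"
  using sub_S[OF st]
proof
  assume "\<exists>k rs. k < length Sl \<and> length rs = k \<and> h = map Report rs \<and>
      Node i ms c = mk_S (drop k Sl) S Us M (upd (take k Sl) rs rep0)"
  then obtain k rs where k: "k < length Sl" and e: "Node i ms c = mk_S (drop k Sl) S Us M (upd (take k Sl) rs rep0)"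
    by blast
  have "drop k Sl = Sl ! k # drop (Suc k) Sl" using k by (simp add: Cons_nth_drop_Suc)
  with e have "i = Sl ! k" "ms = Report ` additive_dom M" by auto
  then show ?thesis using k sSl by auto
next
  assume "\<exists>rs h2. length rs = length Sl \<and> h = map Report rs @ h2 \<and>
      subtree (mk_U Us (price S (upd Sl rs rep0)) M (\<lambda>_. {})) h2 = Some (Node i ms c)"
  then obtain rs h2 where l: "length rs = length Sl" and h: "h = map Report rs @ h2"
    and s: "subtree (mk_U Us (price S (upd Sl rs rep0)) M (\<lambda>_. {})) h2 = Some (Node i ms c)" by blast
  from sub_U[OF s] obtain k As al' where k: "k \<le> length Us" "h2 = map Buy As"
    and e: "Node i ms c = mk_U (drop k Us) (price S (upd Sl rs rep0)) (M - \<Union>(set As)) al'" by blast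
  have kl: "k < length Us"
  proof (rule ccontr)
    assume "\<not> k < length Us"
    then have "drop k Us = []" by simp
    with e show False by simp
  qed
  have dk: "drop k Us = Us ! k # drop (Suc k) Us" using kl by (simp add: Cons_nth_drop_Suc)
  with e have ie: "i = Us ! k" "ms = Buy ` Pow (M - \<Union>(set As))" by auto
  have "distinct (drop k Us)" using dU by simp
  then have ni: "i \<notin> set (drop (Suc k) Us)" using dk ie by simp
  have "i \<in> set Us" using ie kl by simp
  then have "i \<notin> S" using disj by blast
  moreover have "subtree (mk_S Sl S Us M rep0) h = Some (mk_U (i # drop (Suc k) Us) (price S (upd Sl rs rep0)) (M - \<Union>(set As)) al')"
    using st e dk ie by simp
  ultimately show ?thesis using ni h k l ie by blast
qed

lemma avail_of_eq: "avail_of M (map Report rs @ map Buy As) = M - \<Union>(set As)"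
proof -
  have "{A. Buy A \<in> set (map Report rs @ map Buy As)} = set As" by auto
  then show ?thesis by (simp add: avail_of_def)
qed

lemma price_eq:
  assumes "distinct Sl" "set Sl = S" "length rs = length Sl"
  shows "price S (rep_of Sl (map Report rs @ h2)) = price S (upd Sl rs rep0)"
  using assms by (intro price_cong) (metis upd_val)

lemma main_OSP:
  assumes fM: "finite M" and SS: "S \<subseteq> {0..<n}" and dU: "distinct Us" and sU: "set Us = {0..<n} - S"
  shows "OSP (mech M S Us) (additive_dom M) (strat n M S)"
proof -
  define Sl where "Sl = sorted_list_of_set S"
  have fS: "finite S" using SS finite_subset by blast
  have dSl: "distinct Sl" and sSl: "set Sl = S" using fS by (auto simp: Sl_def)
  define rep0 :: "nat \<Rightarrow> 'a \<Rightarrow> real" where "rep0 = (\<lambda>_ _. 0)"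
  define T where "T = mech M S Us"
  have T: "T = mk_S Sl S Us M rep0" by (simp add: T_def mech_def Sl_def rep0_def)
  have disj: "set Us \<inter> S = {}" using sU by blast
  note cl = cls[of Sl S Us M rep0, OF _ dU disj sSl, folded T]
  have valid: "valid_behavior T i (strat n M S i v)" if v: "v \<in> additive_dom M" for i v
    unfolding valid_behavior_def
  proof (intro allI impI)
    fix h assume "node_of T i h"
    then obtain ms c where st: "subtree T h = Some (Node i ms c)" by (auto simp: node_of_def)
    then have ma: "msgs_at T h = ms" by (simp add: msgs_at_def)
    from cl[OF st] show "strat n M S i v h \<in> msgs_at T h"
    proof
      assume "i \<in> S \<and> ms = Report ` additive_dom M"
      then show ?thesis using ma v by (simp add: strat_def)
    next
      assume "\<exists>rs As js al'. i \<notin> S \<and> i \<notin> set js \<and> h = map Report rs @ map Buy As \<and> length rs = length Sl \<and>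
        ms = Buy ` Pow (M - \<Union>(set As)) \<and>
        subtree T h = Some (mk_U (i # js) (price S (upd Sl rs rep0)) (M - \<Union>(set As)) al')"
      then obtain rs As where "i \<notin> S" "h = map Report rs @ map Buy As" "ms = Buy ` Pow (M - \<Union>(set As))"
        by blast
      then show ?thesis using ma by (auto simp: strat_def Let_def avail_of_eq)
    qed
  qed
  show ?thesis
    unfolding OSP_def T_def[symmetric]
  proof (intro allI ballI conjI impI)
    fix i v assume v: "v \<in> additive_dom M"
    show "valid_behavior T i (strat n M S i v)" using valid[OF v] .
    fix h B B'
    assume A: "node_of T i h \<and> valid_profile T B \<and> valid_profile T B' \<and>
          on_path T (B(i := strat n M S i v)) h \<and> on_path T B' h \<and> B' i h \<noteq> strat n M S i v h"
    define X where "X = B(i := strat n M S i v)"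
    have vX: "valid_profile T X" using A valid[OF v] unfolding X_def valid_profile_def by auto
    have oX: "outcome T X = run T X" using outcome_run[OF vX] .
    have oB: "outcome T B' = run T B'" using outcome_run A by blast
    obtain ms c where st: "subtree T h = Some (Node i ms c)" using A by (auto simp: node_of_def)
    from cl[OF st] show "utility v (outcome T B') i \<le> utility v (outcome T (B(i := strat n M S i v))) i"
    proof
      assume "i \<in> S \<and> ms = Report ` additive_dom M"
      then have "i \<notin> set Us" using disj by blast
      then have "fst (run T Y) i = {} \<and> snd (run T Y) i = 0" for Y
        using run_S_notin[of i Us Sl S M rep0] unfolding T by blast
      then show ?thesis unfolding X_def[symmetric] oX oB
        by (simp add: utility_def)
    next
      assume "\<exists>rs As js al'. i \<notin> S \<and> i \<notin> set js \<and> h = map Report rs @ map Buy As \<and> length rs = length Sl \<and>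
        ms = Buy ` Pow (M - \<Union>(set As)) \<and>
        subtree T h = Some (mk_U (i # js) (price S (upd Sl rs rep0)) (M - \<Union>(set As)) al')"
      then obtain rs As js al' where iS: "i \<notin> S" and ij: "i \<notin> set js" and h: "h = map Report rs @ map Buy As"
        and l: "length rs = length Sl" and ms: "ms = Buy ` Pow (M - \<Union>(set As))"
        and st2: "subtree T h = Some (mk_U (i # js) (price S (upd Sl rs rep0)) (M - \<Union>(set As)) al')"
        by blast
      define p where "p = price S (upd Sl rs rep0)"
      define av where "av = M - \<Union>(set As)"
      define Ast where "Ast = {j \<in> av. p j < v j \<or> (p j = v j \<and> i < tiebreak n S (rep_of Sl h) j)}"
      have sX: "strat n M S i v h = Buy Ast"
        using iS unfolding strat_def Ast_def Let_def h av_def p_def Sl_def[symmetric]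
        by (simp add: avail_of_eq price_eq[OF dSl sSl l, of "map Buy As" rep0])
      have "B' i h \<in> msgs_at T h" using A unfolding valid_profile_def valid_behavior_def by blast
      then obtain A' where B'h: "B' i h = Buy A'" and A'av: "A' \<subseteq> av"
        using st ms unfolding av_def by (auto simp: msgs_at_def)
      have r1: "run T X = run (mk_U (i # js) p av al') (\<lambda>k g. X k (h @ g))"
        using run_sub[OF _ st2] A unfolding X_def p_def av_def by blast
      have r2: "run T B' = run (mk_U (i # js) p av al') (\<lambda>k g. B' k (h @ g))"
        using run_sub[OF _ st2] A unfolding p_def av_def by blast
      have "X i h = Buy Ast" using sX by (simp add: X_def)
      then have u1: "fst (run T X) i = Ast" "snd (run T X) i = sum p Ast"
        using r1 by (simp_all add: run_U_notin[OF ij])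
      have u2: "fst (run T B') i = A'" "snd (run T B') i = sum p A'"
        using r2 B'h by (simp_all add: run_U_notin[OF ij])
      have fav: "finite av" using fM by (simp add: av_def)
      have "sum v A' - sum p A' \<le> sum v Ast - sum p Ast"
        by (rule ineq[OF fav A'av]) (auto simp: Ast_def)
      then show ?thesis unfolding X_def[symmetric] oX oB utility_def u1 u2 .
    qed
  qed
qed

theorem lemma4p2:
  fixes n :: nat and M :: "'i set" and ordU :: "nat set \<Rightarrow> nat list"
  assumes "finite M"
    and "\<forall>S \<subseteq> {0..<n}. distinct (ordU S) \<and> set (ordU S) = {0..<n} - S"
  shows "universally_OSP n M (additive_dom M) (rand_mech n M ordU)"
  unfolding universally_OSP_def rand_mech_def
proof (clarsimp simp: Let_def)
  fix f :: "nat \<Rightarrow> bool"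
  define S where "S = {i \<in> {0..<n}. f i}"
  have SS: "S \<subseteq> {0..<n}" by (auto simp: S_def)
  have d: "distinct (ordU S)" "set (ordU S) = {0..<n} - S" using assms(2) SS by auto
  have "set (ordU S) \<subseteq> {..<n}" using d by auto
  then have "mechanism_wf n M (mech M S (ordU S))" by (simp add: mech_def wf_S)
  moreover have "OSP (mech M S (ordU S)) (additive_dom M) (strat n M S)"
    using main_OSP[OF assms(1) SS d] .
  ultimately show "mechanism_wf n M (mech M {i. i < n \<and> f i} (ordU {i. i < n \<and> f i})) \<and>
       OSP (mech M {i. i < n \<and> f i} (ordU {i. i < n \<and> f i})) (additive_dom M) (strat n M {i. i < n \<and> f i})"
    by (simp add: S_def atLeast0LessThan)
qed

end
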